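(* Let $(\Omega,\rho)$ be a metric space, $\beta\in(0,1]$, $A\subset\Omega$ finite with $|A|\ge2$, and $g:A\to[0,1]$ not constant. Let $F:\Omega\to[0,1]$ be the $\beta$-PMSE of $g$ from $A$. Let $E\subset\Omega$ satisfy $\mathrm{diam}(E)^\beta\le\frac12\min_{x\ne x'\in A}\rho(x,x')^\beta$. Then $\sup_{x,x'\in E}\frac{\Lambda^\beta_F(x)}{\Lambda^\beta_F(x')}\le2$.
   Context: $\Lambda_F^\beta(x):=\sup_{y\in\Omega\setminus\{x\}}\frac{|F(x)-F(y)|}{\rho(x,y)^\beta}$. For $x\in\Omega$ and $u,v\in A$ (excluding $u=v=x$), $R_x(u,v):=\frac{g(v)-g(u)}{\rho(x,v)^\beta+\rho(x,u)^\beta}$, $F_x(u,v):=g(u)+R_x(u,v)\rho(x,u)^\beta$, $R^*_x:=\max_{u,v\in A}R_x(u,v)$, $W_x(\epsilon):=\{(u,v)\in A\times A: R_x(u,v)>R_x^*-\epsilon\}$, $\Phi_x(\epsilon):=\{F_x(u,v):(u,v)\in W_x(\epsilon)\}$. The $\beta$-PMSE is $F(x):=\lim_{\epsilon\to0^+}\Phi_x(\epsilon)$, i.e. the unique $r$ with $\sup_{\phi\in\Phi_x(\epsilon)}|\phi-r|\to0$; when a unique maximizer $(u^*_x,v^*_x)$ of $R_x$ exists this equals $g(u^*_x)+\frac{\rho(x,u^*_x)^\beta}{\rho(x,u^*_x)^\beta+\rho(x,v^*_x)^\beta}(g(v^*_x)-g(u^*_x))$. *)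

theory Defs
  imports "HOL-Analysis.Analysis"
begin

definition hoelder_at :: "'a set \<Rightarrow> ('a \<Rightarrow> 'a \<Rightarrow> real) \<Rightarrow> real \<Rightarrow> ('a \<Rightarrow> real) \<Rightarrow> 'a \<Rightarrow> ereal" where
  "hoelder_at \<Omega> \<rho> \<beta> F x = (SUP y \<in> \<Omega> - {x}. ereal (\<bar>F x - F y\<bar> / \<rho> x y powr \<beta>))"

definition pmse_R :: "('a \<Rightarrow> 'a \<Rightarrow> real) \<Rightarrow> real \<Rightarrow> ('a \<Rightarrow> real) \<Rightarrow> 'a \<Rightarrow> 'a \<Rightarrow> 'a \<Rightarrow> real" where
  "pmse_R \<rho> \<beta> g x u v = (g v - g u) / (\<rho> x v powr \<beta> + \<rho> x u powr \<beta>)"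

definition pmse_F :: "('a \<Rightarrow> 'a \<Rightarrow> real) \<Rightarrow> real \<Rightarrow> ('a \<Rightarrow> real) \<Rightarrow> 'a \<Rightarrow> 'a \<Rightarrow> 'a \<Rightarrow> real" where
  "pmse_F \<rho> \<beta> g x u v = g u + pmse_R \<rho> \<beta> g x u v * \<rho> x u powr \<beta>"

definition pmse_pairs :: "'a set \<Rightarrow> 'a \<Rightarrow> ('a \<times> 'a) set" where
  "pmse_pairs A x = {(u, v). u \<in> A \<and> v \<in> A \<and> \<not> (u = x \<and> v = x)}"

definition pmse_Rstar :: "('a \<Rightarrow> 'a \<Rightarrow> real) \<Rightarrow> real \<Rightarrow> 'a set \<Rightarrow> ('a \<Rightarrow> real) \<Rightarrow> 'a \<Rightarrow> real" where
  "pmse_Rstar \<rho> \<beta> A g x = Max ((\<lambda>(u, v). pmse_R \<rho> \<beta> g x u v) ` pmse_pairs A x)"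

definition pmse_W :: "('a \<Rightarrow> 'a \<Rightarrow> real) \<Rightarrow> real \<Rightarrow> 'a set \<Rightarrow> ('a \<Rightarrow> real) \<Rightarrow> 'a \<Rightarrow> real \<Rightarrow> ('a \<times> 'a) set" where
  "pmse_W \<rho> \<beta> A g x \<epsilon> =
     {(u, v) \<in> pmse_pairs A x. pmse_R \<rho> \<beta> g x u v > pmse_Rstar \<rho> \<beta> A g x - \<epsilon>}"

definition pmse_Phi :: "('a \<Rightarrow> 'a \<Rightarrow> real) \<Rightarrow> real \<Rightarrow> 'a set \<Rightarrow> ('a \<Rightarrow> real) \<Rightarrow> 'a \<Rightarrow> real \<Rightarrow> real set" where
  "pmse_Phi \<rho> \<beta> A g x \<epsilon> = (\<lambda>(u, v). pmse_F \<rho> \<beta> g x u v) ` pmse_W \<rho> \<beta> A g x \<epsilon>"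

definition pmse :: "('a \<Rightarrow> 'a \<Rightarrow> real) \<Rightarrow> real \<Rightarrow> 'a set \<Rightarrow> ('a \<Rightarrow> real) \<Rightarrow> 'a \<Rightarrow> real" where
  "pmse \<rho> \<beta> A g x = (THE r. ((\<lambda>\<epsilon>. Sup ((\<lambda>\<phi>. \<bar>\<phi> - r\<bar>) ` pmse_Phi \<rho> \<beta> A g x \<epsilon>)) \<longlongrightarrow> 0) (at_right 0))"

end

theory Submission
  imports Defs
begin
lemma powr_subadd:
  fixes a b p :: real
  assumes "0 \<le> a" "0 \<le> b" "0 < p" "p \<le> 1"
  shows "(a + b) powr p \<le> a powr p + b powr p"
proof (cases "a + b = 0")
  case True
  then show ?thesis using assms by simp
next
  case False
  then have s: "a + b > 0" using assms by simp
  have h1: "a / (a+b) \<le> (a/(a+b)) powr p"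
    using powr_mono'[of p 1 "a/(a+b)"] assms s by simp
  have h2: "b / (a+b) \<le> (b/(a+b)) powr p"
    using powr_mono'[of p 1 "b/(a+b)"] assms s by simp
  have "1 = a/(a+b) + b/(a+b)" using s by (simp add: add_divide_distrib[symmetric])
  also have "\<dots> \<le> (a powr p + b powr p) / (a+b) powr p"
    using h1 h2 by (simp add: powr_divide assms add_divide_distrib)
  finally show ?thesis using s by (simp add: field_simps)
qed

locale pm =
  fixes \<Omega> :: "'a set" and \<rho> :: "'a \<Rightarrow> 'a \<Rightarrow> real" and \<beta> :: real and A :: "'a set" and g :: "'a \<Rightarrow> real"
  assumes ms: "Metric_space \<Omega> \<rho>"
    and bpos: "0 < \<beta>" and ble: "\<beta> \<le> 1"
    and AO: "A \<subseteq> \<Omega>" and finA: "finite A" and cardA: "card A \<ge> 2"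
    and ncst: "\<exists>a\<in>A. \<exists>b\<in>A. g a \<noteq> g b"
begin

abbreviation "d x y \<equiv> \<rho> x y powr \<beta>"
abbreviation "Rs x \<equiv> pmse_Rstar \<rho> \<beta> A g x"
abbreviation "R x u v \<equiv> pmse_R \<rho> \<beta> g x u v"

lemma d_nonneg: "0 \<le> d x y" by simp

lemma d_zero: "x \<in> \<Omega> \<Longrightarrow> y \<in> \<Omega> \<Longrightarrow> d x y = 0 \<longleftrightarrow> x = y"
  using Metric_space.zero[OF ms] Metric_space.nonneg[OF ms] by (simp add: powr_eq_0_iff)

lemma d_pos: "x \<in> \<Omega> \<Longrightarrow> y \<in> \<Omega> \<Longrightarrow> x \<noteq> y \<Longrightarrow> 0 < d x y"
  using d_zero d_nonneg[of x y] by (metis less_eq_real_def)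

lemma d_comm: "d x y = d y x"
  using Metric_space.commute[OF ms] by simp

lemma d_tri: assumes "x \<in> \<Omega>" "y \<in> \<Omega>" "z \<in> \<Omega>" shows "d x z \<le> d x y + d y z"
proof -
  have "d x z \<le> (\<rho> x y + \<rho> y z) powr \<beta>"
    using Metric_space.triangle[OF ms assms] Metric_space.nonneg[OF ms] bpos
    by (intro powr_mono2) auto
  also have "\<dots> \<le> d x y + d y z"
    using powr_subadd Metric_space.nonneg[OF ms] bpos ble by blast
  finally show ?thesis .
qed

lemma pairs_fin: "finite (pmse_pairs A x)"
  by (rule finite_subset[of _ "A \<times> A"]) (auto simp: pmse_pairs_def finA)

lemma pairs_ne: "pmse_pairs A x \<noteq> {}"
proof -
  obtain a where "a \<in> A" "a \<noteq> x"
  proof -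
    have "\<not> A \<subseteq> {x}" using cardA finA
      using card_mono[of "{x}" A] by force
    then show ?thesis using that by blast
  qed
  then have "(a, a) \<in> pmse_pairs A x" by (auto simp: pmse_pairs_def)
  then show ?thesis by blast
qed

lemma Rs_ge: "(u, v) \<in> pmse_pairs A x \<Longrightarrow> R x u v \<le> Rs x"
  unfolding pmse_Rstar_def using pairs_fin
  by (intro Max_ge) (auto intro!: imageI[where f="\<lambda>(u, v). R x u v" and x="(u,v)", simplified])

lemma Rs_att: "\<exists>u v. (u, v) \<in> pmse_pairs A x \<and> R x u v = Rs x"
proof -
  have "Rs x \<in> (\<lambda>(u, v). R x u v) ` pmse_pairs A x"
    unfolding pmse_Rstar_def using pairs_fin pairs_ne by (intro Max_in) auto
  then show ?thesis by force
qed

lemma den_pos: "x \<in> \<Omega> \<Longrightarrow> u \<in> A \<Longrightarrow> v \<in> A \<Longrightarrow> u \<noteq> v \<Longrightarrow> 0 < d x v + d x u"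
proof (cases "u = x")
  case True
  assume "x \<in> \<Omega>" "u \<in> A" "v \<in> A" "u \<noteq> v"
  then have "0 < d x v" using d_pos[of x v] True AO by auto
  then show ?thesis using d_nonneg[of x u] by linarith
next
  case False
  assume "x \<in> \<Omega>" "u \<in> A" "v \<in> A" "u \<noteq> v"
  then have "0 < d x u" using d_pos[of x u] False AO by auto
  then show ?thesis using d_nonneg[of x v] by linarith
qed

lemma Rs_pos: "x \<in> \<Omega> \<Longrightarrow> 0 < Rs x"
proof -
  assume x: "x \<in> \<Omega>"
  obtain a b where ab: "a \<in> A" "b \<in> A" "g a < g b"
    using ncst by (metis linorder_neqE_linordered_idom)
  then have "a \<noteq> b" by auto
  then have "(a, b) \<in> pmse_pairs A x" using ab by (auto simp: pmse_pairs_def)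
  then have "R x a b \<le> Rs x" by (rule Rs_ge)
  moreover have "0 < R x a b" unfolding pmse_R_def
    using den_pos[OF x ab(1,2) \<open>a \<noteq> b\<close>] ab by simp
  ultimately show ?thesis by simp
qed

lemma key: assumes x: "x \<in> \<Omega>" and uv: "u \<in> A" "v \<in> A"
  shows "g v - g u \<le> Rs x * (d x v + d x u)"
proof (cases "u = v")
  case True
  then show ?thesis using Rs_pos[OF x] by simp
next
  case False
  then have "(u, v) \<in> pmse_pairs A x" using uv by (auto simp: pmse_pairs_def)
  then have "R x u v \<le> Rs x" by (rule Rs_ge)
  then show ?thesis using den_pos[OF x uv False] unfolding pmse_R_def
    by (simp add: pos_divide_le_eq)
qed

lemma maxpair: assumes x: "x \<in> \<Omega>"
  shows "\<exists>u v. u \<in> A \<and> v \<in> A \<and> u \<noteq> v \<and> R x u v = Rs x \<and>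
     g u + Rs x * d x u = g v - Rs x * d x v"
proof -
  obtain u v where uv: "(u, v) \<in> pmse_pairs A x" "R x u v = Rs x" using Rs_att by blast
  have uA: "u \<in> A" "v \<in> A" using uv by (auto simp: pmse_pairs_def)
  have "u \<noteq> v" using uv(2) Rs_pos[OF x] unfolding pmse_R_def by auto
  note dp = den_pos[OF x uA this]
  have "g v - g u = Rs x * (d x v + d x u)" using uv(2) dp unfolding pmse_R_def
    by (simp add: field_simps)
  then show ?thesis using uA \<open>u \<noteq> v\<close> uv(2) by (intro exI[of _ u] exI[of _ v]) (auto simp: algebra_simps)
qed

lemma maxval: assumes x: "x \<in> \<Omega>" and p: "(u, v) \<in> pmse_pairs A x" and r: "R x u v = Rs x"
  shows "g u + Rs x * d x u = g v - Rs x * d x v"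
proof -
  have uA: "u \<in> A" "v \<in> A" using p by (auto simp: pmse_pairs_def)
  have "u \<noteq> v" using r Rs_pos[OF x] unfolding pmse_R_def by auto
  note dp = den_pos[OF x uA this]
  have "g v - g u = Rs x * (d x v + d x u)" using r dp unfolding pmse_R_def
    by (simp add: field_simps)
  then show ?thesis by (simp add: algebra_simps)
qed

lemma pmse_char: assumes x: "x \<in> \<Omega>"
  shows "\<exists>u v. u \<in> A \<and> v \<in> A \<and> u \<noteq> v \<and> pmse \<rho> \<beta> A g x = g u + Rs x * d x u
     \<and> g u + Rs x * d x u = g v - Rs x * d x v"
proof -
  obtain u0 v0 where uv0: "u0 \<in> A" "v0 \<in> A" "u0 \<noteq> v0" "R x u0 v0 = Rs x"
    "g u0 + Rs x * d x u0 = g v0 - Rs x * d x v0" using maxpair[OF x] by blast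
  define c where "c = g u0 + Rs x * d x u0"
  define Rf where "Rf = (\<lambda>(u, v). R x u v)"
  define M where "M = {p \<in> pmse_pairs A x. Rf p = Rs x}"
  have p0: "(u0, v0) \<in> M" using uv0 by (auto simp: M_def Rf_def pmse_pairs_def)
  have const: "pmse_F \<rho> \<beta> g x u v = c" if "(u, v) \<in> M" for u v
  proof -
    have p: "(u, v) \<in> pmse_pairs A x" and r: "R x u v = Rs x" using that by (auto simp: M_def Rf_def)
    have uA: "u \<in> A" "v \<in> A" using p by (auto simp: pmse_pairs_def)
    have e: "g u + Rs x * d x u = g v - Rs x * d x v" by (rule maxval[OF x p r])
    have "g v0 - g u \<le> Rs x * (d x v0 + d x u)" by (rule key[OF x uA(1) uv0(2)])
    moreover have "g v - g u0 \<le> Rs x * (d x v + d x u0)" by (rule key[OF x uv0(1) uA(2)])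
    ultimately have "g u + Rs x * d x u = c" using e uv0(5) unfolding c_def by (simp add: algebra_simps)
    then show ?thesis unfolding pmse_F_def r by simp
  qed
  have ev1: "\<forall>\<^sub>F \<epsilon> in at_right (0::real). \<forall>p\<in>pmse_pairs A x. (Rf p > Rs x - \<epsilon>) = (Rf p = Rs x)"
  proof (rule eventually_ball_finite[OF pairs_fin], rule ballI)
    fix p assume p: "p \<in> pmse_pairs A x"
    obtain u v where puv: "p = (u, v)" by (cases p)
    have le: "Rf p \<le> Rs x" using Rs_ge p puv by (auto simp: Rf_def)
    show "\<forall>\<^sub>F \<epsilon> in at_right (0::real). (Rf p > Rs x - \<epsilon>) = (Rf p = Rs x)"
    proof (cases "Rf p = Rs x")
      case True
      then show ?thesis by (simp add: eventually_at_right_less)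
    next
      case False
      then have "Rf p < Rs x" using le by simp
      then show ?thesis unfolding eventually_at_right[OF zero_less_one]
        by (intro exI[of _ "min 1 (Rs x - Rf p)"]) auto
    qed
  qed
  have ev: "\<forall>\<^sub>F \<epsilon> in at_right (0::real). pmse_Phi \<rho> \<beta> A g x \<epsilon> = {c}"
    using ev1
  proof (rule eventually_mono)
    fix \<epsilon> :: real assume h: "\<forall>p\<in>pmse_pairs A x. (Rf p > Rs x - \<epsilon>) = (Rf p = Rs x)"
    have "pmse_W \<rho> \<beta> A g x \<epsilon> = M"
      using h unfolding pmse_W_def M_def Rf_def by auto
    then show "pmse_Phi \<rho> \<beta> A g x \<epsilon> = {c}"
      unfolding pmse_Phi_def using const p0 by fastforce
  qed
  have P: "((\<lambda>\<epsilon>. Sup ((\<lambda>\<phi>. \<bar>\<phi> - r\<bar>) ` pmse_Phi \<rho> \<beta> A g x \<epsilon>)) \<longlongrightarrow> 0) (at_right 0)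
     \<longleftrightarrow> r = c" for r
  proof -
    have e2: "\<forall>\<^sub>F \<epsilon> in at_right (0::real). \<bar>c - r\<bar> = Sup ((\<lambda>\<phi>. \<bar>\<phi> - r\<bar>) ` pmse_Phi \<rho> \<beta> A g x \<epsilon>)"
      using ev by (rule eventually_mono) simp
    have "((\<lambda>\<epsilon>. Sup ((\<lambda>\<phi>. \<bar>\<phi> - r\<bar>) ` pmse_Phi \<rho> \<beta> A g x \<epsilon>)) \<longlongrightarrow> 0) (at_right 0)
       \<longleftrightarrow> ((\<lambda>\<epsilon>::real. \<bar>c - r\<bar>) \<longlongrightarrow> 0) (at_right 0)"
      using Lim_transform_eventually[OF _ e2] Lim_transform_eventually[OF _ eventually_mono[OF e2]]
      by (metis (mono_tags, lifting))
    also have "\<dots> \<longleftrightarrow> r = c" by (subst tendsto_const_iff) auto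
    finally show ?thesis .
  qed
  have "pmse \<rho> \<beta> A g x = c" unfolding pmse_def using P by (intro the_equality) auto
  then show ?thesis using uv0 c_def by blast
qed

context
  fixes F :: "'a \<Rightarrow> real"
  assumes Fdef: "\<forall>x\<in>\<Omega>. F x = pmse \<rho> \<beta> A g x"
begin

lemma F_char: assumes x: "x \<in> \<Omega>"
  shows "\<exists>u v. u \<in> A \<and> v \<in> A \<and> u \<noteq> v \<and> F x = g u + Rs x * d x u
     \<and> F x = g v - Rs x * d x v"
proof -
  obtain u v where "u \<in> A" "v \<in> A" "u \<noteq> v" "pmse \<rho> \<beta> A g x = g u + Rs x * d x u"
     "g u + Rs x * d x u = g v - Rs x * d x v" using pmse_char[OF x] by blast
  then show ?thesis using Fdef x by (intro exI[of _ u] exI[of _ v]) simp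
qed

lemma F_up: assumes x: "x \<in> \<Omega>" and u: "u \<in> A" shows "F x \<le> g u + Rs x * d x u"
proof -
  obtain u0 v0 where h: "u0 \<in> A" "v0 \<in> A" "F x = g v0 - Rs x * d x v0" using F_char[OF x] by blast
  show ?thesis using key[OF x u h(2)] h(3) by (simp add: algebra_simps)
qed

lemma F_lo: assumes x: "x \<in> \<Omega>" and v: "v \<in> A" shows "g v - Rs x * d x v \<le> F x"
proof -
  obtain u0 v0 where h: "u0 \<in> A" "v0 \<in> A" "F x = g u0 + Rs x * d x u0" using F_char[OF x] by blast
  show ?thesis using key[OF x h(1) v] h(3) by (simp add: algebra_simps)
qed

lemma F_lip: assumes x: "x \<in> \<Omega>" and y: "y \<in> \<Omega>" shows "\<bar>F x - F y\<bar> \<le> Rs x * d x y"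
proof -
  obtain u v where h: "u \<in> A" "v \<in> A" "F x = g u + Rs x * d x u" "F x = g v - Rs x * d x v"
    using F_char[OF x] by blast
  obtain u' v' where h': "u' \<in> A" "v' \<in> A" "F y = g u' + Rs y * d y u'" "F y = g v' - Rs y * d y v'"
    using F_char[OF y] by blast
  have uO: "u \<in> \<Omega>" "v \<in> \<Omega>" "u' \<in> \<Omega>" "v' \<in> \<Omega>" using h h' AO by auto
  have px: "0 \<le> Rs x" using Rs_pos[OF x] by simp
  have dxy: "d y x = d x y" by (rule d_comm)
  show ?thesis
  proof (cases "Rs y \<le> Rs x")
    case True
    have a1: "Rs y * d y u \<le> Rs x * d y u" by (rule mult_right_mono[OF True d_nonneg])
    have a2: "Rs x * d y u \<le> Rs x * (d y x + d x u)" by (rule mult_left_mono[OF d_tri[OF y x uO(1)] px])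
    have b1: "Rs y * d y v \<le> Rs x * d y v" by (rule mult_right_mono[OF True d_nonneg])
    have b2: "Rs x * d y v \<le> Rs x * (d y x + d x v)" by (rule mult_left_mono[OF d_tri[OF y x uO(2)] px])
    have "F y \<le> g u + Rs y * d y u" by (rule F_up[OF y h(1)])
    moreover have "g v - Rs y * d y v \<le> F y" by (rule F_lo[OF y h(2)])
    ultimately show ?thesis using a1 a2 b1 b2 h(3,4) dxy by (simp add: algebra_simps abs_le_iff)
  next
    case False
    then have le: "Rs x \<le> Rs y" by simp
    have a1: "Rs x * d y u' \<le> Rs y * d y u'" by (rule mult_right_mono[OF le d_nonneg])
    have a2: "Rs x * d x u' \<le> Rs x * (d x y + d y u')" by (rule mult_left_mono[OF d_tri[OF x y uO(3)] px])
    have b1: "Rs x * d y v' \<le> Rs y * d y v'" by (rule mult_right_mono[OF le d_nonneg])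
    have b2: "Rs x * d x v' \<le> Rs x * (d x y + d y v')" by (rule mult_left_mono[OF d_tri[OF x y uO(4)] px])
    have "F x \<le> g u' + Rs x * d x u'" by (rule F_up[OF x h'(1)])
    moreover have "g v' - Rs x * d x v' \<le> F x" by (rule F_lo[OF x h'(2)])
    ultimately show ?thesis using a1 a2 b1 b2 h'(3,4) by (simp add: algebra_simps abs_le_iff)
  qed
qed

lemma hoel_up: assumes x: "x \<in> \<Omega>" shows "hoelder_at \<Omega> \<rho> \<beta> F x \<le> ereal (Rs x)"
  unfolding hoelder_at_def
proof (rule SUP_least)
  fix y assume y: "y \<in> \<Omega> - {x}"
  have dp: "0 < d x y" using d_pos[OF x] y by auto
  have "\<bar>F x - F y\<bar> / d x y \<le> Rs x" using F_lip[OF x] y dp by (simp add: pos_divide_le_eq)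
  then show "ereal (\<bar>F x - F y\<bar> / d x y) \<le> ereal (Rs x)" by simp
qed

lemma hoel_lo: assumes x: "x \<in> \<Omega>" shows "ereal (Rs x) \<le> hoelder_at \<Omega> \<rho> \<beta> F x"
proof -
  obtain u v where h: "u \<in> A" "v \<in> A" "u \<noteq> v" "F x = g u + Rs x * d x u" "F x = g v - Rs x * d x v"
    using F_char[OF x] by blast
  have uO: "u \<in> \<Omega>" "v \<in> \<Omega>" using h AO by auto
  obtain y where y: "y \<in> \<Omega> - {x}" "Rs x \<le> \<bar>F x - F y\<bar> / d x y"
  proof (cases "u = x")
    case False
    have dp: "0 < d x u" using d_pos[OF x uO(1)] False by auto
    have "F u \<le> g u" using F_up[OF uO(1) h(1)] d_zero[OF uO(1) uO(1)] by simp
    then have "Rs x * d x u \<le> \<bar>F x - F u\<bar>" using h(4) by simp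
    then show ?thesis using that[of u] dp uO False by (simp add: pos_le_divide_eq)
  next
    case True
    then have ne: "v \<noteq> x" using h(3) by simp
    have dp: "0 < d x v" using d_pos[OF x uO(2)] ne by auto
    have "g v \<le> F v" using F_lo[OF uO(2) h(2)] d_zero[OF uO(2) uO(2)] by simp
    then have "Rs x * d x v \<le> \<bar>F x - F v\<bar>" using h(5) by simp
    then show ?thesis using that[of v] dp uO ne by (simp add: pos_le_divide_eq)
  qed
  have "ereal (Rs x) \<le> ereal (\<bar>F x - F y\<bar> / d x y)" using y(2) by simp
  also have "\<dots> \<le> hoelder_at \<Omega> \<rho> \<beta> F x" unfolding hoelder_at_def
    by (rule SUP_upper[OF y(1)])
  finally show ?thesis .
qed

end

lemma ratio: assumes x: "x \<in> \<Omega>" and x': "x' \<in> \<Omega>"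
  and close: "d x' x \<le> (1/2) * Min {\<rho> a b powr \<beta> | a b. a \<in> A \<and> b \<in> A \<and> a \<noteq> b}"
  shows "Rs x \<le> 2 * Rs x'"
proof -
  obtain u v where h: "u \<in> A" "v \<in> A" "u \<noteq> v" "R x u v = Rs x" using maxpair[OF x] by blast
  have uO: "u \<in> \<Omega>" "v \<in> \<Omega>" using h AO by auto
  define D where "D = d x v + d x u"
  define D' where "D' = d x' v + d x' u"
  have Dp: "0 < D" unfolding D_def by (rule den_pos[OF x h(1-3)])
  have e: "g v - g u = Rs x * D" using h(4) Dp unfolding pmse_R_def D_def by (simp add: field_simps)
  have k: "g v - g u \<le> Rs x' * D'" unfolding D'_def by (rule key[OF x' h(1,2)])
  have fin: "finite {\<rho> a b powr \<beta> | a b. a \<in> A \<and> b \<in> A \<and> a \<noteq> b}"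
    by (rule finite_subset[of _ "(\<lambda>(a, b). \<rho> a b powr \<beta>) ` (A \<times> A)"]) (auto simp: finA)
  have "Min {\<rho> a b powr \<beta> | a b. a \<in> A \<and> b \<in> A \<and> a \<noteq> b} \<le> d u v"
    using h by (intro Min_le[OF fin]) blast
  moreover have "d u v \<le> d u x + d x v" by (rule d_tri[OF uO(1) x uO(2)])
  moreover have "d x' v \<le> d x' x + d x v" by (rule d_tri[OF x' x uO(2)])
  moreover have "d x' u \<le> d x' x + d x u" by (rule d_tri[OF x' x uO(1)])
  ultimately have DD: "D' \<le> 2 * D" using close d_comm[of u x] D_def D'_def by linarith
  have "Rs x' * D' \<le> Rs x' * (2 * D)" using Rs_pos[OF x'] DD by (intro mult_left_mono) auto
  then have "Rs x * D \<le> (2 * Rs x') * D" using e k by simp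
  then show ?thesis using Dp by simp
qed

end
theorem mainTheorem12:
  fixes \<Omega> :: "'a set" and \<rho> :: "'a \<Rightarrow> 'a \<Rightarrow> real" and \<beta> :: real
    and A E :: "'a set" and g F :: "'a \<Rightarrow> real"
  assumes "Metric_space \<Omega> \<rho>"
    and "0 < \<beta>" and "\<beta> \<le> 1"
    and "A \<subseteq> \<Omega>" and "finite A" and "card A \<ge> 2"
    and "\<forall>a\<in>A. 0 \<le> g a \<and> g a \<le> 1"
    and "\<exists>a\<in>A. \<exists>b\<in>A. g a \<noteq> g b"
    and "\<forall>x\<in>\<Omega>. F x = pmse \<rho> \<beta> A g x"
    and "E \<subseteq> \<Omega>"
    and "\<forall>e\<in>E. \<forall>e'\<in>E. \<rho> e e' powr \<beta>
           \<le> (1/2) * Min {\<rho> a b powr \<beta> | a b. a \<in> A \<and> b \<in> A \<and> a \<noteq> b}"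
  shows "\<forall>x\<in>E. \<forall>x'\<in>E. hoelder_at \<Omega> \<rho> \<beta> F x \<le> 2 * hoelder_at \<Omega> \<rho> \<beta> F x'"
proof (intro ballI)
  interpret pm \<Omega> \<rho> \<beta> A g using assms by (intro pm.intro) auto
  fix x x' assume xE: "x \<in> E" and x'E: "x' \<in> E"
  have x: "x \<in> \<Omega>" and x': "x' \<in> \<Omega>" using xE x'E assms(10) by auto
  have r: "pmse_Rstar \<rho> \<beta> A g x \<le> 2 * pmse_Rstar \<rho> \<beta> A g x'"
    using ratio[OF x x'] assms(11) xE x'E by blast
  have "hoelder_at \<Omega> \<rho> \<beta> F x \<le> ereal (pmse_Rstar \<rho> \<beta> A g x)"
    by (rule hoel_up[OF assms(9) x])
  also have "\<dots> \<le> ereal (2 * pmse_Rstar \<rho> \<beta> A g x')" using r by simp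
  also have "\<dots> = 2 * ereal (pmse_Rstar \<rho> \<beta> A g x')" by simp
  also have "\<dots> \<le> 2 * hoelder_at \<Omega> \<rho> \<beta> F x'"
    by (rule ereal_mult_left_mono[OF hoel_lo[OF assms(9) x']]) simp
  finally show "hoelder_at \<Omega> \<rho> \<beta> F x \<le> 2 * hoelder_at \<Omega> \<rho> \<beta> F x'" .
qed

end
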